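(* Let $G$ be a unit square graph and let $C$ be a maximal clique of $G$. Then there are vertices $v_1,v_2,v_3,v_4\in V(G)$ (not necessarily distinct) such that $C=\bigcap_{i=1}^4 N[v_i]$.
   Context: A unit square graph is a graph $G$ admitting $f\colon V(G)\to\mathbb{R}^2$ with $vw\in E(G)$ iff $\|f(v)-f(w)\|_\infty\le1$ for distinct $v,w$. $N[v]$ denotes the closed neighborhood of $v$. *)

theory Defs
  imports Main "HOL.Real"
begin

definition graph :: "'a set \<Rightarrow> ('a \<Rightarrow> 'a \<Rightarrow> bool) \<Rightarrow> bool" where
  "graph V E \<longleftrightarrow> (\<forall>v w. E v w \<longrightarrow> v \<in> V \<and> w \<in> V \<and> v \<noteq> w \<and> E w v)"

definition dist_inf :: "real \<times> real \<Rightarrow> real \<times> real \<Rightarrow> real" where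
  "dist_inf p q = max \<bar>fst p - fst q\<bar> \<bar>snd p - snd q\<bar>"

definition unit_square_graph :: "'a set \<Rightarrow> ('a \<Rightarrow> 'a \<Rightarrow> bool) \<Rightarrow> bool" where
  "unit_square_graph V E \<longleftrightarrow> graph V E \<and>
     (\<exists>f :: 'a \<Rightarrow> real \<times> real. \<forall>v\<in>V. \<forall>w\<in>V. v \<noteq> w \<longrightarrow>
        (E v w \<longleftrightarrow> dist_inf (f v) (f w) \<le> 1))"

definition closed_nbhd :: "'a set \<Rightarrow> ('a \<Rightarrow> 'a \<Rightarrow> bool) \<Rightarrow> 'a \<Rightarrow> 'a set" where
  "closed_nbhd V E v = {w \<in> V. w = v \<or> E v w}"

definition clique :: "'a set \<Rightarrow> ('a \<Rightarrow> 'a \<Rightarrow> bool) \<Rightarrow> 'a set \<Rightarrow> bool" where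
  "clique V E C \<longleftrightarrow> C \<subseteq> V \<and> (\<forall>v\<in>C. \<forall>w\<in>C. v \<noteq> w \<longrightarrow> E v w)"

definition maximal_clique :: "'a set \<Rightarrow> ('a \<Rightarrow> 'a \<Rightarrow> bool) \<Rightarrow> 'a set \<Rightarrow> bool" where
  "maximal_clique V E C \<longleftrightarrow> clique V E C \<and> (\<forall>D. clique V E D \<and> C \<subseteq> D \<longrightarrow> D = C)"

end

theory Submission
  imports Defs
begin

lemma ex_argmin:
  fixes g :: "'a \<Rightarrow> real"
  assumes "finite S" "S \<noteq> {}"
  shows "\<exists>x\<in>S. \<forall>y\<in>S. g x \<le> g y"
proof -
  have "Min (g ` S) \<in> g ` S" using assms by simp
  then obtain x where "x \<in> S" "g x = Min (g ` S)" by auto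
  moreover have "\<forall>y\<in>S. Min (g ` S) \<le> g y" using assms by simp
  ultimately show ?thesis by metis
qed

lemma ex_argmax:
  fixes g :: "'a \<Rightarrow> real"
  assumes "finite S" "S \<noteq> {}"
  shows "\<exists>x\<in>S. \<forall>y\<in>S. g y \<le> g x"
  using ex_argmin[OF assms, of "\<lambda>x. - g x"] by auto

theorem mainTheorem8:
  fixes V :: "'a set" and E :: "'a \<Rightarrow> 'a \<Rightarrow> bool" and C :: "'a set"
  assumes "finite V" and "V \<noteq> {}"
    and "unit_square_graph V E"
    and "maximal_clique V E C"
  shows "\<exists>v1\<in>V. \<exists>v2\<in>V. \<exists>v3\<in>V. \<exists>v4\<in>V.
           C = closed_nbhd V E v1 \<inter> closed_nbhd V E v2 \<inter> closed_nbhd V E v3 \<inter> closed_nbhd V E v4"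
proof -
  have gr: "graph V E" using assms(3) unfolding unit_square_graph_def by auto
  obtain f :: "'a \<Rightarrow> real \<times> real" where f: "\<And>v w. v\<in>V \<Longrightarrow> w\<in>V \<Longrightarrow> v \<noteq> w \<Longrightarrow>
        (E v w \<longleftrightarrow> dist_inf (f v) (f w) \<le> 1)"
    using assms(3) unfolding unit_square_graph_def by blast
  have cl: "clique V E C" and mx: "\<And>D. clique V E D \<Longrightarrow> C \<subseteq> D \<Longrightarrow> D = C"
    using assms(4) unfolding maximal_clique_def by auto
  have CV: "C \<subseteq> V" using cl unfolding clique_def by auto
  have fin: "finite C" using CV assms(1) finite_subset by auto
  have ne: "C \<noteq> {}"
  proof
    assume "C = {}"
    obtain v where v: "v \<in> V" using assms(2) by auto
    have "clique V E {v}" using v unfolding clique_def by auto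
    then have "{v} = C" using mx \<open>C = {}\<close> by auto
    then show False using \<open>C = {}\<close> by auto
  qed
  obtain a where a: "a \<in> C" "\<forall>y\<in>C. fst (f a) \<le> fst (f y)" using ex_argmin[OF fin ne, of "\<lambda>x. fst (f x)"] by blast
  obtain b where b: "b \<in> C" "\<forall>y\<in>C. fst (f y) \<le> fst (f b)" using ex_argmax[OF fin ne, of "\<lambda>x. fst (f x)"] by blast
  obtain c where c: "c \<in> C" "\<forall>y\<in>C. snd (f c) \<le> snd (f y)" using ex_argmin[OF fin ne, of "\<lambda>x. snd (f x)"] by blast
  obtain d where d: "d \<in> C" "\<forall>y\<in>C. snd (f y) \<le> snd (f d)" using ex_argmax[OF fin ne, of "\<lambda>x. snd (f x)"] by blast
  have near: "dist_inf (f v) (f w) \<le> 1" if "w \<in> closed_nbhd V E v" "v \<in> V" for v w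
  proof (cases "w = v")
    case True then show ?thesis by (simp add: dist_inf_def)
  next
    case False
    then have "E v w" "w \<in> V" using that unfolding closed_nbhd_def by auto
    then show ?thesis using f[of v w] \<open>v\<in>V\<close> False by auto
  qed
  have sub: "C \<subseteq> closed_nbhd V E x" if "x \<in> C" for x
    using cl that unfolding clique_def closed_nbhd_def by auto
  have "C = closed_nbhd V E a \<inter> closed_nbhd V E b \<inter> closed_nbhd V E c \<inter> closed_nbhd V E d"
  proof
    show "C \<subseteq> closed_nbhd V E a \<inter> closed_nbhd V E b \<inter> closed_nbhd V E c \<inter> closed_nbhd V E d"
      using sub a b c d by auto
  next
    show "closed_nbhd V E a \<inter> closed_nbhd V E b \<inter> closed_nbhd V E c \<inter> closed_nbhd V E d \<subseteq> C"
    proof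
      fix w assume w: "w \<in> closed_nbhd V E a \<inter> closed_nbhd V E b \<inter> closed_nbhd V E c \<inter> closed_nbhd V E d"
      have wV: "w \<in> V" using w unfolding closed_nbhd_def by auto
      have da: "dist_inf (f a) (f w) \<le> 1" using near w a CV by auto
      have db: "dist_inf (f b) (f w) \<le> 1" using near w b CV by auto
      have dc: "dist_inf (f c) (f w) \<le> 1" using near w c CV by auto
      have dd: "dist_inf (f d) (f w) \<le> 1" using near w d CV by auto
      have adj: "E u w" if u: "u \<in> C" "u \<noteq> w" for u
      proof -
        have "fst (f a) \<le> fst (f u)" "fst (f u) \<le> fst (f b)"
             "snd (f c) \<le> snd (f u)" "snd (f u) \<le> snd (f d)" using a b c d u by auto
        then have "dist_inf (f u) (f w) \<le> 1" using da db dc dd unfolding dist_inf_def by auto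
        then show ?thesis using f[of u w] u CV wV by auto
      qed
      have "clique V E (insert w C)"
        unfolding clique_def
      proof (intro conjI ballI impI)
        show "insert w C \<subseteq> V" using CV wV by auto
      next
        fix x y assume "x \<in> insert w C" "y \<in> insert w C" "x \<noteq> y"
        then show "E x y" using cl adj gr unfolding clique_def graph_def by blast
      qed
      then have "insert w C = C" using mx by auto
      then show "w \<in> C" by auto
    qed
  qed
  then show ?thesis using a b c d CV by blast
qed

end
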